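(* When the characteristic functions range over $V_{\ge3}$, the competitive ratio of any individually rational (non-wasteful, possibly non-irrevocable) distribution policy cannot exceed $\frac{3\mathsf{min}}{\mathsf{max}}$, whether players act as greedy players or as pessimistic greedy players.
   Context: Players: a finite set $N=\{a_1,\dots,a_n\}$. A characteristic function is $v:2^N\to\mathbb{R}_{\ge 0}$ with $v(\emptyset)=0$. There are fixed, known constants $0<\mathsf{min}\le\mathsf{max}$ and every $v$ considered is monotone and bounded: $\mathsf{min}\le v(S)\le v(T)\le\mathsf{max}$ for all nonempty $S\subseteq T\subseteq N$. For an integer $\delta\ge1$, $V_\delta$ is the set of such $v$ with $\delta\cdot\mathsf{min}\le\mathsf{max}<(\delta+1)\cdot\mathsf{min}$; $V_{\ge3}=\bigcup_{\delta\ge3}V_\delta$. A coalition structure is a partition $C$ of $N$; $\mathsf{SW}(C\mid v)=\sum_{S\in C}v(S)$. Online process: an arrival order is a permutation $\pi=(\pi_1,\dots,\pi_n)$ of $N$; player $\pi_t$ arrives at time $t$. For $S\subseteq N$, $\pi_{|S}$ denotes the players of $S$ in the relative order of $\pi$. Let $C^{t-1}$ be the coalition structure of players arrived before time $t$ ($C^0=\emptyset$). At time $t$, player $\pi_t$ either joins an existing coalition $S\in C^{t-1}$ or forms $\{\pi_t\}$ (choice $S=\emptyset$); decisions are never revised. A distribution policy $\varphi$ assigns to every coalition $S$ with order $\pi_{|S}$ a vector $(\varphi_i(S,\pi_{|S}))_{i\in S}$ with $\sum_{i\in S}\varphi_i=v(S)$. In general (non-irrevocable) policies each share is split as $\varphi_i=\bar\varphi_i+\tilde\varphi_i$,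 where $\bar\varphi_i$ is paid out irrevocably (never reduced later) and $\tilde\varphi_i$ is promised but held in a bank for the coalition and may be redistributed (increased or decreased) when new players join; if nobody joins, $\tilde\varphi_i$ is paid out. Greedy players: $\pi_t$ chooses $S\in C^{t-1}\cup\{\emptyset\}$ maximizing $\varphi_{\pi_t}(S\cup\{\pi_t\},\pi_{|S\cup\{\pi_t\}})$. Pessimistic greedy players instead maximize $\bar\varphi_{\pi_t}(S\cup\{\pi_t\},\pi_{|S\cup\{\pi_t\}})$. Ties are broken by a predetermined rule. $C_g^t$ denotes the structure after time $t$ and $C_g=C_g^n$. Individual rationality: for every $v$ (and $\pi$), every $t\le n$, every $S\in C_g^t$ and every $i\in S$, $\varphi_i(S)\ge v(\{i\})$. The competitive ratio over a class is $\alpha=\inf_{v,\pi}\mathsf{SW}(C_g(v,\pi\mid\varphi))/\max_C\mathsf{SW}(C\mid v)$, over $v$ in the class and all arrival orders $\pi$. *)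

theory Defs
  imports Complex_Main "HOL-Library.Disjoint_Sets"
begin

(* Players are natural numbers; a game is given by a finite player set N and a
   characteristic function v, of which only the values on subsets of N matter. *)
type_synonym game = "nat set \<Rightarrow> real"

(* A share function: sh v xs i = share of player i in the coalition set xs,
   whose members arrived in the order given by the (distinct) list xs. *)
type_synonym share_fn = "game \<Rightarrow> nat list \<Rightarrow> nat \<Rightarrow> real"

(* Predetermined tie-breaking rule: given the game, the current coalition structure,
   the arriving player and the set of maximising options ([] = stay alone),
   it picks one option. *)
type_synonym tie_rule = "game \<Rightarrow> nat list set \<Rightarrow> nat \<Rightarrow> nat list set \<Rightarrow> nat list"

definition bounded_monotone_game :: "real \<Rightarrow> real \<Rightarrow> nat set \<Rightarrow> game \<Rightarrow> bool" where
  "bounded_monotone_game mn mx N v \<longleftrightarrow>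
     v {} = 0 \<and>
     (\<forall>S T. S \<noteq> {} \<and> S \<subseteq> T \<and> T \<subseteq> N \<longrightarrow> mn \<le> v S \<and> v S \<le> v T \<and> v T \<le> mx)"

definition V_delta :: "real \<Rightarrow> real \<Rightarrow> nat \<Rightarrow> nat set \<Rightarrow> game set" where
  "V_delta mn mx \<delta> N =
     {v. bounded_monotone_game mn mx N v \<and> real \<delta> * mn \<le> mx \<and> mx < (real \<delta> + 1) * mn}"

definition V_ge3 :: "real \<Rightarrow> real \<Rightarrow> nat set \<Rightarrow> game set" where
  "V_ge3 mn mx N = (\<Union>\<delta>\<in>{3..}. V_delta mn mx \<delta> N)"

definition arrival_order :: "nat set \<Rightarrow> nat list \<Rightarrow> bool" where
  "arrival_order N \<pi> \<longleftrightarrow> distinct \<pi> \<and> set \<pi> = N"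

definition total_share :: "share_fn \<Rightarrow> share_fn \<Rightarrow> share_fn" where
  "total_share phibar phitilde = (\<lambda>v xs i. phibar v xs i + phitilde v xs i)"

definition non_wasteful :: "real \<Rightarrow> real \<Rightarrow> share_fn \<Rightarrow> bool" where
  "non_wasteful mn mx phi \<longleftrightarrow>
     (\<forall>N v xs. finite N \<and> bounded_monotone_game mn mx N v \<and> distinct xs \<and> xs \<noteq> [] \<and> set xs \<subseteq> N
        \<longrightarrow> (\<Sum>i\<in>set xs. phi v xs i) = v (set xs))"

(* general (possibly non-irrevocable) policy phi = phibar + phitilde, where the
   irrevocably paid part phibar is never reduced when a new player joins *)
definition general_policy :: "real \<Rightarrow> real \<Rightarrow> share_fn \<Rightarrow> share_fn \<Rightarrow> bool" where
  "general_policy mn mx phibar phitilde \<longleftrightarrow>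
     non_wasteful mn mx (total_share phibar phitilde) \<and>
     (\<forall>N v xs j. finite N \<and> bounded_monotone_game mn mx N v \<and> distinct (xs @ [j]) \<and> xs \<noteq> []
        \<and> set (xs @ [j]) \<subseteq> N \<longrightarrow> (\<forall>i\<in>set xs. phibar v xs i \<le> phibar v (xs @ [j]) i))"

definition valid_tie_rule :: "tie_rule \<Rightarrow> bool" where
  "valid_tie_rule tie \<longleftrightarrow> (\<forall>v C p M. M \<noteq> {} \<longrightarrow> tie v C p M \<in> M)"

(* one step: the arriving player p maximises sel (phi for greedy players,
   phibar for pessimistic greedy players); coalitions are lists in arrival order *)
definition greedy_step :: "share_fn \<Rightarrow> tie_rule \<Rightarrow> game \<Rightarrow> nat list set \<Rightarrow> nat \<Rightarrow> nat list set" where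
  "greedy_step sel tie v C p =
     (let opts = insert [] C;
          M = {S \<in> opts. \<forall>S'\<in>opts. sel v (S' @ [p]) p \<le> sel v (S @ [p]) p};
          S = tie v C p M
      in if S = [] then insert [p] C else insert (S @ [p]) (C - {S}))"

definition greedy_run :: "share_fn \<Rightarrow> tie_rule \<Rightarrow> game \<Rightarrow> nat list \<Rightarrow> nat list set" where
  "greedy_run sel tie v \<pi> = foldl (greedy_step sel tie v) {} \<pi>"

definition SW :: "game \<Rightarrow> nat list set \<Rightarrow> real" where
  "SW v C = (\<Sum>S\<in>C. v (set S))"

definition opt_SW :: "nat set \<Rightarrow> game \<Rightarrow> real" where
  "opt_SW N v = Max {(\<Sum>S\<in>P. v S) | P. partition_on N P}"

definition individually_rational :: "real \<Rightarrow> real \<Rightarrow> share_fn \<Rightarrow> share_fn \<Rightarrow> tie_rule \<Rightarrow> bool" where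
  "individually_rational mn mx phi sel tie \<longleftrightarrow>
     (\<forall>N v \<pi> t. finite N \<and> bounded_monotone_game mn mx N v \<and> arrival_order N \<pi> \<and> t \<le> length \<pi>
        \<longrightarrow> (\<forall>S\<in>greedy_run sel tie v (take t \<pi>). \<forall>i\<in>set S. v {i} \<le> phi v S i))"

definition competitive_ratio :: "real \<Rightarrow> real \<Rightarrow> share_fn \<Rightarrow> tie_rule \<Rightarrow> real" where
  "competitive_ratio mn mx sel tie =
     Inf {SW v (greedy_run sel tie v \<pi>) / opt_SW N v | N v \<pi>.
            finite N \<and> N \<noteq> {} \<and> v \<in> V_ge3 mn mx N \<and> arrival_order N \<pi>}"

end

theory Submission
  imports Defs
begin

lemma step_cases:
  assumes vt: "valid_tie_rule tie" and fin: "finite C"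
  shows "greedy_step sel tie v C p = insert [p] C \<or>
         (\<exists>S\<in>C. greedy_step sel tie v C p = insert (S @ [p]) (C - {S}))"
proof -
  define opts where "opts = insert [] C"
  define f where "f = (\<lambda>S. sel v (S @ [p]) p)"
  define M where "M = {S \<in> opts. \<forall>S'\<in>opts. f S' \<le> f S}"
  have fo: "finite opts" "opts \<noteq> {}" using fin by (auto simp: opts_def)
  have "Max (f ` opts) \<in> f ` opts" using fo by simp
  then obtain x where x: "x \<in> opts" "f x = Max (f ` opts)" by auto
  have "x \<in> M" using x fo unfolding M_def by simp
  hence "M \<noteq> {}" by auto
  hence "tie v C p M \<in> M" using vt unfolding valid_tie_rule_def by simp
  hence tin: "tie v C p M \<in> opts" unfolding M_def by simp
  have eq: "greedy_step sel tie v C p =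
     (if tie v C p M = [] then insert [p] C else insert (tie v C p M @ [p]) (C - {tie v C p M}))"
    unfolding greedy_step_def Let_def M_def opts_def f_def by simp
  show ?thesis
  proof (cases "tie v C p M = []")
    case True thus ?thesis using eq by simp
  next
    case False
    hence "tie v C p M \<in> C" using tin by (auto simp: opts_def)
    thus ?thesis using eq False by auto
  qed
qed

lemma run_inv:
  assumes vt: "valid_tie_rule tie"
  shows "finite C \<Longrightarrow> (\<forall>S\<in>C. set S \<subseteq> A) \<Longrightarrow> set xs \<subseteq> A \<Longrightarrow>
    finite (foldl (greedy_step sel tie v) C xs) \<and> (\<forall>S\<in>foldl (greedy_step sel tie v) C xs. set S \<subseteq> A)"
proof (induction xs arbitrary: C)
  case Nil thus ?case by simp
next
  case (Cons p xs)
  let ?C = "greedy_step sel tie v C p"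
  have pA: "p \<in> A" using Cons.prems by simp
  have "finite ?C \<and> (\<forall>S\<in>?C. set S \<subseteq> A)"
  proof (cases "?C = insert [p] C")
    case True thus ?thesis using Cons.prems pA by simp
  next
    case False
    then obtain S where S: "S \<in> C" "?C = insert (S @ [p]) (C - {S})"
      using step_cases[OF vt Cons.prems(1), of sel v p] by blast
    have "set (S @ [p]) \<subseteq> A" using S(1) Cons.prems(2) pA by auto
    thus ?thesis using S(2) Cons.prems(1,2) by auto
  qed
  hence r: "finite (foldl (greedy_step sel tie v) ?C xs) \<and> (\<forall>S\<in>foldl (greedy_step sel tie v) ?C xs. set S \<subseteq> A)"
    using Cons.IH[of ?C] Cons.prems(3) by simp
  have e: "foldl (greedy_step sel tie v) C (p # xs) = foldl (greedy_step sel tie v) ?C xs" by simp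
  show ?case unfolding e by (rule r)
qed

lemma main:
  fixes mn mx :: real and phi sel :: share_fn and tie :: tie_rule
  assumes mn: "0 < mn" and mx: "3 * mn \<le> mx"
    and nw: "non_wasteful mn mx phi"
    and vt: "valid_tie_rule tie"
    and ir: "individually_rational mn mx phi sel tie"
  shows "competitive_ratio mn mx sel tie \<le> 3 * mn / mx"
proof -
  define N :: "nat set" where "N = {0,1,2}"
  define v :: game where "v = (\<lambda>S. if S = {} then 0 else if S = N then mx else mn)"
  define \<pi> :: "nat list" where "\<pi> = [0,1,2]"
  have bm: "bounded_monotone_game mn mx N v"
    unfolding bounded_monotone_game_def v_def using mn mx by auto
  have finN: "finite N" "N \<noteq> {}" by (auto simp: N_def)
  have ao: "arrival_order N \<pi>" by (auto simp: arrival_order_def N_def \<pi>_def)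
  define d where "d = nat \<lfloor>mx / mn\<rfloor>"
  have q: "3 \<le> mx / mn" using mn mx by (simp add: field_simps)
  have d3: "d \<ge> 3" unfolding d_def using q by linarith
  have dr: "real d = of_int \<lfloor>mx / mn\<rfloor>" unfolding d_def using q by simp
  have "real d \<le> mx / mn" "mx / mn < real d + 1" using dr by linarith+
  hence "real d * mn \<le> mx" "mx < (real d + 1) * mn" using mn by (simp_all add: field_simps)
  hence vV: "v \<in> V_ge3 mn mx N" unfolding V_ge3_def V_delta_def using bm d3 by auto
  have vsing: "v {i} = mn" for i
  proof -
    have "card N = 3" by (simp add: N_def)
    hence "{i} \<noteq> N" by auto
    thus ?thesis by (simp add: v_def)
  qed
  have bad: False if "S \<in> greedy_run sel tie v (take t \<pi>)" "t \<le> 3" "distinct S"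
     "set S \<subseteq> N" "card (set S) \<ge> 2" "set S \<noteq> N" for S t
  proof -
    have irS: "\<forall>i\<in>set S. v {i} \<le> phi v S i"
      using ir[unfolded individually_rational_def, rule_format, of N v \<pi> t S] that finN bm ao
      by (auto simp: \<pi>_def)
    have "S \<noteq> []" using that by auto
    hence sum: "(\<Sum>i\<in>set S. phi v S i) = v (set S)"
      using nw finN bm that unfolding non_wasteful_def by blast
    have "(\<Sum>i\<in>set S. mn) \<le> (\<Sum>i\<in>set S. phi v S i)"
      apply (rule sum_mono) using irS vsing by auto
    moreover have "v (set S) = mn" using that by (auto simp: v_def)
    moreover have "(\<Sum>i\<in>set S. mn) \<ge> 2 * mn" using that mn by simp
    ultimately show False using sum mn by linarith
  qed
  let ?st = "greedy_step sel tie v"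
  have C1: "?st {} 0 = {[0]}" using step_cases[OF vt, of "{}" sel v 0] by auto
  have r2: "greedy_run sel tie v (take 2 \<pi>) = ?st {[0]} 1"
    unfolding greedy_run_def \<pi>_def using C1 by simp
  have C2: "?st {[0]} 1 = {[1],[0]}"
  proof -
    have "?st {[0]} 1 = {[1],[0]} \<or> ?st {[0]} 1 = {[0,1]}"
      using step_cases[OF vt, of "{[0]}" sel v 1] by simp
    moreover have "?st {[0]} 1 \<noteq> {[0,1]}"
    proof
      assume h: "?st {[0]} 1 = {[0,1]}"
      have "[0,1] \<in> greedy_run sel tie v (take 2 \<pi>)" using r2 h by simp
      thus False
      proof (rule bad)
        show "(2::nat) \<le> 3" by simp
        show "distinct ([0,1]::nat list)" by simp
        show "set ([0,1]::nat list) \<subseteq> N" by (simp add: N_def)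
        show "2 \<le> card (set ([0,1]::nat list))" by simp
        have "(2::nat) \<in> N" "(2::nat) \<notin> set [0,1]" by (simp_all add: N_def)
        thus "set ([0,1]::nat list) \<noteq> N" by blast
      qed
    qed
    ultimately show ?thesis by blast
  qed
  have r3: "greedy_run sel tie v \<pi> = ?st {[1],[0]} 2"
    unfolding greedy_run_def \<pi>_def using C1 C2 by simp
  have r3': "greedy_run sel tie v (take 3 \<pi>) = ?st {[1],[0]} 2"
    using r3 by (simp add: \<pi>_def)
  have C3: "?st {[1],[0]} 2 = {[2],[1],[0]}"
  proof -
    have "?st {[1],[0]} 2 = {[2],[1],[0]} \<or> ?st {[1],[0]} 2 = {[1,2],[0]}
           \<or> ?st {[1],[0]} 2 = {[0,2],[1]}"
    proof -
      have e: "{[0], [Suc 0]} - {[Suc 0]} = {[0::nat]}" by auto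
      show ?thesis using step_cases[OF vt, of "{[1],[0]}" sel v 2] by (simp add: insert_commute e) blast
    qed
    moreover have "?st {[1],[0]} 2 \<noteq> {[1,2],[0]}"
    proof
      assume h: "?st {[1],[0]} 2 = {[1,2],[0]}"
      have "[1,2] \<in> greedy_run sel tie v (take 3 \<pi>)" using r3' h by simp
      thus False
      proof (rule bad)
        show "(3::nat) \<le> 3" by simp
        show "distinct ([1,2]::nat list)" by simp
        show "set ([1,2]::nat list) \<subseteq> N" by (simp add: N_def)
        show "2 \<le> card (set ([1,2]::nat list))" by simp
        have "(0::nat) \<in> N" "(0::nat) \<notin> set [1,2]" by (simp_all add: N_def)
        thus "set ([1,2]::nat list) \<noteq> N" by blast
      qed
    qed
    moreover have "?st {[1],[0]} 2 \<noteq> {[0,2],[1]}"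
    proof
      assume h: "?st {[1],[0]} 2 = {[0,2],[1]}"
      have "[0,2] \<in> greedy_run sel tie v (take 3 \<pi>)" using r3' h by simp
      thus False
      proof (rule bad)
        show "(3::nat) \<le> 3" by simp
        show "distinct ([0,2]::nat list)" by simp
        show "set ([0,2]::nat list) \<subseteq> N" by (simp add: N_def)
        show "2 \<le> card (set ([0,2]::nat list))" by simp
        have "(1::nat) \<in> N" "(1::nat) \<notin> set [0,2]" by (simp_all add: N_def)
        thus "set ([0,2]::nat list) \<noteq> N" by blast
      qed
    qed
    ultimately show ?thesis by blast
  qed
  have SW3: "SW v (greedy_run sel tie v \<pi>) = 3 * mn"
    using r3 C3 by (simp add: SW_def v_def N_def)
  have finP: "finite {P. partition_on N' P}" if "finite N'" for N' :: "nat set"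
  proof (rule finite_subset)
    show "{P. partition_on N' P} \<subseteq> Pow (Pow N')" by (auto simp: partition_on_def)
    show "finite (Pow (Pow N'))" using that by simp
  qed
  have finO: "finite {(\<Sum>S\<in>P. v' S) | P. partition_on N' P}" if "finite N'" for N' :: "nat set" and v' :: game
  proof -
    have "{(\<Sum>S\<in>P. v' S) | P. partition_on N' P} = (\<lambda>P. \<Sum>S\<in>P. v' S) ` {P. partition_on N' P}" by auto
    thus ?thesis using finP[OF that] by simp
  qed
  have optge: "opt_SW N' v' \<ge> v' N'" if "finite N'" "N' \<noteq> {}" for N' :: "nat set" and v' :: game
  proof -
    have "partition_on N' {N'}" using that by (auto simp: partition_on_def disjoint_def)
    hence "(\<Sum>S\<in>{N'}. v' S) \<in> {(\<Sum>S\<in>P. v' S) | P. partition_on N' P}" by blast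
    thus ?thesis unfolding opt_SW_def using Max_ge[OF finO[OF that(1)]] by simp
  qed
  have vN: "v N = mx" using finN(2) by (simp add: v_def)
  have optN: "opt_SW N v \<ge> mx" using optge[OF finN, of v] vN by simp
  have mxp: "mx > 0" using mn mx by linarith
  have elem: "SW v (greedy_run sel tie v \<pi>) / opt_SW N v \<in>
     {SW v (greedy_run sel tie v \<pi>) / opt_SW N v | N v \<pi>.
            finite N \<and> N \<noteq> {} \<and> v \<in> V_ge3 mn mx N \<and> arrival_order N \<pi>}"
    using finN vV ao by blast
  have bdd: "bdd_below {SW v (greedy_run sel tie v \<pi>) / opt_SW N v | N v \<pi>.
            finite N \<and> N \<noteq> {} \<and> v \<in> V_ge3 mn mx N \<and> arrival_order N \<pi>}"
  proof (rule bdd_belowI[of _ 0])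
    fix x assume "x \<in> {SW v (greedy_run sel tie v \<pi>) / opt_SW N v | N v \<pi>.
            finite N \<and> N \<noteq> {} \<and> v \<in> V_ge3 mn mx N \<and> arrival_order N \<pi>}"
    then obtain N' v' \<pi>' where h: "x = SW v' (greedy_run sel tie v' \<pi>') / opt_SW N' v'"
      "finite N'" "N' \<noteq> {}" "v' \<in> V_ge3 mn mx N'" "arrival_order N' \<pi>'" by blast
    have bm': "bounded_monotone_game mn mx N' v'" using h(4) unfolding V_ge3_def V_delta_def by auto
    have inv: "\<forall>S\<in>greedy_run sel tie v' \<pi>'. set S \<subseteq> N'"
      using run_inv[OF vt, of "{}" N' \<pi>' sel v'] h(5) unfolding greedy_run_def arrival_order_def by auto
    have "0 \<le> v' (set S)" if "S \<in> greedy_run sel tie v' \<pi>'" for S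
    proof (cases "set S = {}")
      case True thus ?thesis using bm' by (simp add: bounded_monotone_game_def)
    next
      case False thus ?thesis using bm' inv that mn unfolding bounded_monotone_game_def
        by (meson dual_order.trans less_le_not_le order_refl)
    qed
    hence "SW v' (greedy_run sel tie v' \<pi>') \<ge> 0" unfolding SW_def by (simp add: sum_nonneg)
    moreover have "opt_SW N' v' \<ge> 0"
    proof -
      have "v' N' \<ge> mn" using bm' h(3) unfolding bounded_monotone_game_def by blast
      thus ?thesis using optge[OF h(2) h(3), of v'] mn by linarith
    qed
    ultimately show "0 \<le> x" using h(1) by simp
  qed
  have "competitive_ratio mn mx sel tie \<le> SW v (greedy_run sel tie v \<pi>) / opt_SW N v"
    unfolding competitive_ratio_def by (rule cInf_lower[OF elem bdd])
  also have "\<dots> = 3 * mn / opt_SW N v" using SW3 by simp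
  also have "\<dots> \<le> 3 * mn / mx"
    using optN mxp mn by (intro divide_left_mono) auto
  finally show ?thesis .
qed

theorem theorem7:
  fixes mn mx :: real and phibar phitilde :: share_fn and tie :: tie_rule
  assumes "0 < mn" and "3 * mn \<le> mx"
    and "general_policy mn mx phibar phitilde"
    and "valid_tie_rule tie"
  shows "(individually_rational mn mx (total_share phibar phitilde) (total_share phibar phitilde) tie
           \<longrightarrow> competitive_ratio mn mx (total_share phibar phitilde) tie \<le> 3 * mn / mx)
       \<and> (individually_rational mn mx (total_share phibar phitilde) phibar tie
           \<longrightarrow> competitive_ratio mn mx phibar tie \<le> 3 * mn / mx)"
proof -
  have nw: "non_wasteful mn mx (total_share phibar phitilde)"
    using assms(3) unfolding general_policy_def by blast
  show ?thesis using main[OF assms(1,2) nw assms(4)] by blast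
qed

end
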